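(* There is an infinite family of graphs $G_n$ on $n$ vertices ($n\to\infty$) with edge density $1+O(1/\log^* n)$ such that Broadcast on $G_n$ is not solvable with fewer than $\Theta(n/\log^* n)$ ignorant agents.
   Context: $\log^* n$ denotes the iterated logarithm. Edge density of a graph with $m$ edges and $n$ nodes is $m/n$. Broadcast model: a connected base graph $G=(V,E)$ with $n$ nodes. There is one source agent holding a message $\mathcal M$ and $k\ge1$ ignorant agents (agents not holding $\mathcal M$); initially all agents occupy pairwise distinct nodes, the initial placement being chosen by the adversary. Time proceeds in synchronous rounds; in each round: (1) the adversary removes a (possibly empty) set $E'\subseteq E$ of edges such that $(V,E\setminus E')$ is connected; (2) each agent (agents have unique IDs, local memory, and see the entire current graph, the positions of all agents and which agents hold $\mathcal M$) chooses either to stay or to traverse an edge of $E\setminus E'$ incident to its current node; (3) agents move. Whenever an ignorant agent is at the same node as an agent holding $\mathcal M$, it receives $\mathcal M$ and becomes a source agent. The adversary is adaptive and knows the agents' strategy. Broadcast is solvable on $G$ with $k$ ignorant agents if the agents have a strategy such that, for every initial placement and every adversary behaviour, after finitely many rounds all agents hold $\mathcal M$; otherwise the adversary is said to have a winning strategy. *)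

theory Defs
  imports Complex_Main
begin

definition log_star :: "real \<Rightarrow> nat" where
  "log_star x = (LEAST i. ((\<lambda>y. log 2 y) ^^ i) x \<le> 1)"

definition simple_graph :: "'v set \<Rightarrow> 'v set set \<Rightarrow> bool" where
  "simple_graph V E \<longleftrightarrow> finite V \<and> (\<forall>e\<in>E. \<exists>u v. e = {u, v} \<and> u \<noteq> v \<and> u \<in> V \<and> v \<in> V)"

definition connected_graph :: "'v set \<Rightarrow> 'v set set \<Rightarrow> bool" where
  "connected_graph V F \<longleftrightarrow> (\<forall>u\<in>V. \<forall>v\<in>V. (u, v) \<in> {(x, y). {x, y} \<in> F}\<^sup>*)"

text \<open>Agents are numbered 0..k; agent 0 is the source, agents 1..k are ignorant.
  A history is the initial placement p0 together with the list of rounds played so far,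
  each round recorded as (surviving edge set E \<setminus> E', positions after moving).\<close>

type_synonym 'v history = "('v set set \<times> (nat \<Rightarrow> 'v)) list"

definition cur_pos :: "(nat \<Rightarrow> 'v) \<Rightarrow> 'v history \<Rightarrow> (nat \<Rightarrow> 'v)" where
  "cur_pos p0 h = (if h = [] then p0 else snd (last h))"

definition spread :: "nat \<Rightarrow> nat set \<Rightarrow> (nat \<Rightarrow> 'v) \<Rightarrow> nat set" where
  "spread k I p = I \<union> {i. i \<le> k \<and> (\<exists>j\<in>I. p j = p i)}"

definition informed :: "nat \<Rightarrow> 'v history \<Rightarrow> nat set" where
  "informed k h = foldl (\<lambda>I r. spread k I (snd r)) {0} h"

text \<open>Agents' (joint, deterministic, history-dependent) strategy: given initial placement,
  history, and the current edge set after the adversary's removal, output new positions.\<close>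
definition agent_strategy :: "'v set \<Rightarrow> 'v set set \<Rightarrow> nat \<Rightarrow>
    ((nat \<Rightarrow> 'v) \<Rightarrow> 'v history \<Rightarrow> 'v set set \<Rightarrow> (nat \<Rightarrow> 'v)) \<Rightarrow> bool" where
  "agent_strategy V E k \<sigma> \<longleftrightarrow>
     (\<forall>p0 h F. F \<subseteq> E \<and> connected_graph V F \<longrightarrow>
        (\<forall>i\<le>k. \<sigma> p0 h F i = cur_pos p0 h i \<or> {cur_pos p0 h i, \<sigma> p0 h F i} \<in> F))"

text \<open>Adaptive adversary: given the history, chooses the surviving edge set E \<setminus> E',
  which must keep the graph connected.\<close>
definition adversary :: "'v set \<Rightarrow> 'v set set \<Rightarrow>
    ((nat \<Rightarrow> 'v) \<Rightarrow> 'v history \<Rightarrow> 'v set set) \<Rightarrow> bool" where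
  "adversary V E \<alpha> \<longleftrightarrow> (\<forall>p0 h. \<alpha> p0 h \<subseteq> E \<and> connected_graph V (\<alpha> p0 h))"

primrec play :: "((nat \<Rightarrow> 'v) \<Rightarrow> 'v history \<Rightarrow> 'v set set \<Rightarrow> (nat \<Rightarrow> 'v)) \<Rightarrow>
    ((nat \<Rightarrow> 'v) \<Rightarrow> 'v history \<Rightarrow> 'v set set) \<Rightarrow> (nat \<Rightarrow> 'v) \<Rightarrow> nat \<Rightarrow> 'v history" where
  "play \<sigma> \<alpha> p0 0 = []"
| "play \<sigma> \<alpha> p0 (Suc t) =
     (let h = play \<sigma> \<alpha> p0 t; F = \<alpha> p0 h in h @ [(F, \<sigma> p0 h F)])"

definition broadcast_solvable :: "'v set \<Rightarrow> 'v set set \<Rightarrow> nat \<Rightarrow> bool" where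
  "broadcast_solvable V E k \<longleftrightarrow>
     (\<exists>\<sigma>. agent_strategy V E k \<sigma> \<and>
        (\<forall>p0. inj_on p0 {..k} \<and> p0 ` {..k} \<subseteq> V \<longrightarrow>
          (\<forall>\<alpha>. adversary V E \<alpha> \<longrightarrow>
             (\<exists>t. {..k} \<subseteq> informed k (play \<sigma> \<alpha> p0 t)))))"

end

theory Submission
  imports Defs "HOL-Library.Infinite_Set"
begin

lemma iter_le:
  "0 < x \<Longrightarrow> x \<le> 2^i \<Longrightarrow> \<exists>t\<le>i. ((\<lambda>y. log 2 y) ^^ t) x \<le> 1"
proof (induction i arbitrary: x)
  case 0
  then show ?case by auto
next
  case (Suc i)
  show ?case
  proof (cases "x \<le> 1")
    case True
    then show ?thesis by (intro exI[of _ 0]) auto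
  next
    case False
    hence gt: "0 < log 2 x" by simp
    have "log 2 x \<le> log 2 (2 ^ Suc i)"
      using Suc.prems by (subst log_le_cancel_iff) auto
    also have "\<dots> = real (Suc i)" by (rule log_pow_cancel) auto
    also have "\<dots> \<le> 2 ^ i"
    proof -
      have "Suc i \<le> 2 ^ i" by (induction i) auto
      then show ?thesis by (metis of_nat_le_iff of_nat_numeral of_nat_power)
    qed
    finally obtain t where t: "t \<le> i" "((\<lambda>y. log 2 y) ^^ t) (log 2 x) \<le> 1"
      using Suc.IH gt by blast
    have "((\<lambda>y. log 2 y) ^^ Suc t) x \<le> 1"
      using t(2) by (simp only: funpow_Suc_right o_apply)
    then show ?thesis using t(1) by (intro exI[of _ "Suc t"]) auto
  qed
qed

lemma log_star_le: "0 < x \<Longrightarrow> x \<le> 2^i \<Longrightarrow> log_star x \<le> i"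
proof -
  assume a: "0 < x" "x \<le> 2^i"
  obtain t where t: "t \<le> i" "((\<lambda>y. log 2 y) ^^ t) x \<le> 1" using iter_le[OF a] by blast
  have "log_star x \<le> t" unfolding log_star_def by (rule Least_le) (rule t(2))
  then show ?thesis using t(1) by simp
qed

lemma log_star_ge1: "1 < x \<Longrightarrow> x \<le> 2^i \<Longrightarrow> 1 \<le> log_star x"
proof -
  assume a: "1 < x" "x \<le> 2^i"
  obtain t where t: "((\<lambda>y. log 2 y) ^^ t) x \<le> 1" using iter_le[of x i] a by auto
  have "((\<lambda>y. log 2 y) ^^ (log_star x)) x \<le> 1"
    unfolding log_star_def by (rule LeastI[of _ t]) (rule t)
  then show ?thesis using a(1) by (cases "log_star x") auto
qed

definition Eg :: "nat \<Rightarrow> nat \<Rightarrow> nat set set" where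
  "Eg n m = (\<lambda>v. {0,v}) ` {1..<n} \<union> (\<lambda>i. {2*i+1, 2*i+2}) ` {..<m}"

definition advS :: "nat \<Rightarrow> nat set \<Rightarrow> nat set" where
  "advS m P = {x. \<exists>i<m. (x = 2*i+1 \<and> 2*i+1 \<in> P) \<or> (x = 2*i+2 \<and> 2*i+2 \<in> P \<and> 2*i+1 \<notin> P)}"

definition advF :: "nat \<Rightarrow> nat \<Rightarrow> nat set \<Rightarrow> nat set set" where
  "advF n m P = Eg n m - (\<lambda>x. {0,x}) ` advS m P"

lemma advS_pos: "x \<in> advS m P \<Longrightarrow> 0 < x"
  unfolding advS_def by auto

lemma advS_partner:
  assumes "x \<in> advS m P"
  obtains i w where "i < m" "x \<in> {2*i+1, 2*i+2}" "w \<in> {2*i+1, 2*i+2}" "w \<noteq> x" "w \<notin> advS m P"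
proof -
  from assms obtain i where i: "i < m"
    "(x = 2*i+1 \<and> 2*i+1 \<in> P) \<or> (x = 2*i+2 \<and> 2*i+2 \<in> P \<and> 2*i+1 \<notin> P)"
    unfolding advS_def by blast
  show ?thesis
  proof (cases "x = 2*i+1")
    case True
    have "2*i+2 \<notin> advS m P"
    proof
      assume "2*i+2 \<in> advS m P"
      then obtain j where "j < m"
        "(2*i+2 = 2*j+1 \<and> 2*j+1 \<in> P) \<or> (2*i+2 = 2*j+2 \<and> 2*j+2 \<in> P \<and> 2*j+1 \<notin> P)"
        unfolding advS_def by blast
      moreover have "2*i+2 \<noteq> 2*j+1" by presburger
      ultimately show False using i True by auto
    qed
    then show ?thesis using that[of i "2*i+2"] i True by auto
  next
    case False
    with i have x: "x = 2*i+2" "2*i+1 \<notin> P" by auto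
    have "2*i+1 \<notin> advS m P"
    proof
      assume "2*i+1 \<in> advS m P"
      then obtain j where "j < m"
        "(2*i+1 = 2*j+1 \<and> 2*j+1 \<in> P) \<or> (2*i+1 = 2*j+2 \<and> 2*j+2 \<in> P \<and> 2*j+1 \<notin> P)"
        unfolding advS_def by blast
      moreover have "2*i+1 \<noteq> 2*j+2" by presburger
      ultimately show False using x by auto
    qed
    then show ?thesis using that[of i "2*i+1"] i x by auto
  qed
qed

lemma advF_sub: "advF n m P \<subseteq> Eg n m"
  unfolding advF_def by auto

lemma advF_conn:
  assumes "2*m < n"
  shows "connected_graph {..<n} (advF n m P)"
proof -
  let ?F = "advF n m P"
  let ?R = "{(x, y). {x, y} \<in> ?F}"
  have sym: "(x,y) \<in> ?R \<Longrightarrow> (y,x) \<in> ?R" for x y by (auto simp: insert_commute)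
  have symst: "(x,y) \<in> ?R\<^sup>* \<Longrightarrow> (y,x) \<in> ?R\<^sup>*" for x y
  proof (induction rule: rtrancl_induct)
    case base then show ?case by simp
  next
    case (step y z)
    then show ?case using sym by (meson converse_rtrancl_into_rtrancl)
  qed
  have star_not: "{0,v} \<in> ?F" if "0 < v" "v < n" "v \<notin> advS m P" for v
  proof -
    have "{0,v} \<in> Eg n m" unfolding Eg_def using that by auto
    moreover have "{0,v} \<notin> (\<lambda>x. {0,x}) ` advS m P"
    proof
      assume "{0,v} \<in> (\<lambda>x. {0,x}) ` advS m P"
      then obtain x where "x \<in> advS m P" "{0,v} = {0,x}" by blast
      then have "x = v" using advS_pos[of x m P] that by (auto simp: doubleton_eq_iff)
      then show False using that \<open>x \<in> advS m P\<close> by simp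
    qed
    ultimately show ?thesis unfolding advF_def by blast
  qed
  have to0: "(v,0) \<in> ?R\<^sup>*" if "v < n" for v
  proof (cases "v = 0")
    case True then show ?thesis by simp
  next
    case False
    show ?thesis
    proof (cases "v \<in> advS m P")
      case False2: False
      have "(v,0) \<in> ?R" using star_not[of v] False False2 that by (auto simp: insert_commute)
      then show ?thesis by blast
    next
      case True
      obtain i w where iw: "i < m" "v \<in> {2*i+1, 2*i+2}" "w \<in> {2*i+1, 2*i+2}" "w \<noteq> v"
        "w \<notin> advS m P" using advS_partner[OF True] by metis
      have wn: "0 < w" "w < n" using iw assms by auto
      have "{v,w} = {2*i+1, 2*i+2}" using iw by auto
      hence "{v,w} \<in> Eg n m" unfolding Eg_def using iw by auto
      moreover have "{v,w} \<notin> (\<lambda>x. {0,x}) ` advS m P"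
        using iw wn False by (auto simp: doubleton_eq_iff)
      ultimately have "(v,w) \<in> ?R" unfolding advF_def by auto
      moreover have "(w,0) \<in> ?R" using star_not[OF wn iw(5)] by (auto simp: insert_commute)
      ultimately show ?thesis by (meson rtrancl.simps r_into_rtrancl rtrancl_into_rtrancl)
    qed
  qed
  show ?thesis unfolding connected_graph_def
  proof (intro ballI)
    fix u v assume "u \<in> {..<n}" "v \<in> {..<n}"
    then have "(u,0) \<in> ?R\<^sup>*" "(0,v) \<in> ?R\<^sup>*" using to0 symst by auto
    then show "(u, v) \<in> ?R\<^sup>*" by (meson rtrancl_trans)
  qed
qed

lemma cur_pos_snoc: "cur_pos p0 (h @ [r]) = snd r"
  unfolding cur_pos_def by simp

lemma informed_snoc: "informed k (h @ [r]) = spread k (informed k h) (snd r)"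
  unfolding informed_def by simp

lemma Eg_edge:
  assumes "{x,y} \<in> Eg n m" "x \<noteq> 0"
  shows "y = 0 \<or> (\<exists>i<m. x \<in> {2*i+1, 2*i+2} \<and> y \<in> {2*i+1, 2*i+2})"
  using assms unfolding Eg_def by (auto simp: doubleton_eq_iff)

lemma unsolvable:
  assumes mn: "2*m < n" and k1: "1 \<le> k" and km: "k < m"
  shows "\<not> broadcast_solvable {..<n} (Eg n m) k"
proof
  assume "broadcast_solvable {..<n} (Eg n m) k"
  then obtain \<sigma> where leg: "agent_strategy {..<n} (Eg n m) k \<sigma>" and
    win: "\<And>p0 \<alpha>. inj_on p0 {..k} \<and> p0 ` {..k} \<subseteq> {..<n} \<Longrightarrow> adversary {..<n} (Eg n m) \<alpha> \<Longrightarrow>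
          (\<exists>t. {..k} \<subseteq> informed k (play \<sigma> \<alpha> p0 t))"
    unfolding broadcast_solvable_def by blast
  define p0 :: "nat \<Rightarrow> nat" where "p0 = (\<lambda>i. 2*i+1)"
  define \<alpha> where "\<alpha> = (\<lambda>(q::nat\<Rightarrow>nat) h. advF n m (cur_pos q h ` {..k}))"
  have adv: "adversary {..<n} (Eg n m) \<alpha>"
    unfolding adversary_def \<alpha>_def using advF_sub advF_conn[OF mn] by blast
  have inj: "inj_on p0 {..k} \<and> p0 ` {..k} \<subseteq> {..<n}"
    unfolding p0_def inj_on_def using km mn by auto
  have pos: "\<forall>i\<le>k. cur_pos p0 (play \<sigma> \<alpha> p0 t) i \<in> {2*i+1, 2*i+2}" for t
  proof (induction t)
    case 0
    then show ?case by (simp add: cur_pos_def p0_def)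
  next
    case (Suc t)
    define h where "h = play \<sigma> \<alpha> p0 t"
    define F where "F = \<alpha> p0 h"
    define P where "P = cur_pos p0 h ` {..k}"
    have FF: "F = advF n m P" unfolding F_def \<alpha>_def P_def by simp
    have new: "cur_pos p0 (play \<sigma> \<alpha> p0 (Suc t)) = \<sigma> p0 h F"
      by (simp add: h_def F_def Let_def cur_pos_snoc)
    have IH: "\<forall>i\<le>k. cur_pos p0 h i \<in> {2*i+1, 2*i+2}" using Suc h_def by simp
    have Fok: "F \<subseteq> Eg n m \<and> connected_graph {..<n} F"
      using adv unfolding adversary_def F_def by blast
    show ?case
    proof (intro allI impI)
      fix i assume ik: "i \<le> k"
      let ?x = "cur_pos p0 h i"
      let ?y = "\<sigma> p0 h F i"
      have xi: "?x \<in> {2*i+1, 2*i+2}" using IH ik by blast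
      have mv: "?y = ?x \<or> {?x, ?y} \<in> F"
        using leg Fok ik unfolding agent_strategy_def by blast
      have "?y \<in> {2*i+1, 2*i+2}"
      proof (cases "?y = ?x")
        case True then show ?thesis using xi by simp
      next
        case False
        then have e: "{?x, ?y} \<in> F" using mv by blast
        then have eE: "{?x, ?y} \<in> Eg n m" using Fok by blast
        have x0: "?x \<noteq> 0" using xi by auto
        have xS: "?x \<in> advS m P"
        proof -
          have im: "i < m" using ik km by simp
          show ?thesis
          proof (cases "?x = 2*i+1")
            case True
            then show ?thesis unfolding advS_def P_def using im ik by force
          next
            case False
            then have x2: "?x = 2*i+2" using xi by auto
            have "2*i+1 \<notin> P"
            proof
              assume "2*i+1 \<in> P"
              then obtain j where j: "j \<le> k" "cur_pos p0 h j = 2*i+1" unfolding P_def by auto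
              then have "cur_pos p0 h j \<in> {2*j+1, 2*j+2}" using IH by blast
              then have "j = i" using j(2) by auto
              then show False using j(2) x2 by simp
            qed
            moreover have "2*i+2 \<in> P" unfolding P_def using x2 ik by force
            ultimately show ?thesis unfolding advS_def using im x2 by blast
          qed
        qed
        from Eg_edge[OF eE x0] show ?thesis
        proof
          assume "?y = 0"
          then have "{?x, ?y} \<in> (\<lambda>x. {0,x}) ` advS m P" using xS by (auto simp: insert_commute)
          then show ?thesis using e FF unfolding advF_def by blast
        next
          assume "\<exists>j<m. ?x \<in> {2*j+1, 2*j+2} \<and> ?y \<in> {2*j+1, 2*j+2}"
          then obtain j where "?x \<in> {2*j+1, 2*j+2}" "?y \<in> {2*j+1, 2*j+2}" by blast
          moreover have "j = i" using xi calculation(1) by auto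
          ultimately show ?thesis by simp
        qed
      qed
      then show "cur_pos p0 (play \<sigma> \<alpha> p0 (Suc t)) i \<in> {2*i+1, 2*i+2}" using new by simp
    qed
  qed
  have inf: "informed k (play \<sigma> \<alpha> p0 t) = {0}" for t
  proof (induction t)
    case 0
    then show ?case by (simp add: informed_def)
  next
    case (Suc t)
    define h where "h = play \<sigma> \<alpha> p0 t"
    have "play \<sigma> \<alpha> p0 (Suc t) = h @ [(\<alpha> p0 h, \<sigma> p0 h (\<alpha> p0 h))]"
      by (simp add: h_def Let_def)
    then have eq: "informed k (play \<sigma> \<alpha> p0 (Suc t)) =
        spread k {0} (cur_pos p0 (play \<sigma> \<alpha> p0 (Suc t)))"
      using Suc h_def by (simp add: informed_snoc cur_pos_snoc)
    let ?p = "cur_pos p0 (play \<sigma> \<alpha> p0 (Suc t))"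
    have "i = 0" if "i \<le> k" "?p 0 = ?p i" for i
    proof -
      have "?p 0 \<in> {1, 2}" using pos[of "Suc t"] by auto
      moreover have "?p i \<in> {2*i+1, 2*i+2}" using pos[of "Suc t"] that(1) by blast
      ultimately show ?thesis using that(2) by auto
    qed
    then show ?case unfolding eq spread_def by auto
  qed
  obtain t where "{..k} \<subseteq> informed k (play \<sigma> \<alpha> p0 t)" using win[OF inj adv] by blast
  then show False using inf[of t] k1 by auto
qed

lemma good_n:
  assumes L1: "1 \<le> L" and L8: "8*L \<le> n" and Ldef: "log_star (real n) = L"
  shows "\<exists>E :: nat set set.
       simple_graph {..<n} E \<and> connected_graph {..<n} E \<and>
       real (card E) / real n \<le> 1 + 1 / real (log_star (real n)) \<and>
       (\<forall>k. 1 \<le> k \<and> real k < (1/8) * real n / real (log_star (real n))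
              \<longrightarrow> \<not> broadcast_solvable {..<n} E k)"
proof -
  define m where "m = n div (4*L)"
  have m4: "m * (4*L) \<le> n" unfolding m_def by (rule div_times_less_eq_dividend)
  have npos: "0 < n" using L1 L8 by linarith
  have mn: "2*m < n"
  proof -
    have "m * 4 \<le> m * (4*L)" using L1 by simp
    then show ?thesis using m4 npos by linarith
  qed
  have sg: "simple_graph {..<n} (Eg n m)"
    unfolding simple_graph_def Eg_def using mn by force
  have cg: "connected_graph {..<n} (Eg n m)"
  proof -
    have "connected_graph {..<n} (advF n m {})" by (rule advF_conn[OF mn])
    moreover have "advF n m {} = Eg n m" unfolding advF_def advS_def by simp
    ultimately show ?thesis by simp
  qed
  have card: "card (Eg n m) \<le> n + m"
  proof -
    have "card (Eg n m) \<le> card ((\<lambda>v. {0,v}) ` {1..<n}) + card ((\<lambda>i. {2*i+1, 2*i+2}) ` {..<m})"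
      unfolding Eg_def by (rule card_Un_le)
    also have "\<dots> \<le> card {1..<n} + card {..<m}"
      by (intro add_mono card_image_le) auto
    finally show ?thesis by simp
  qed
  have dens: "real (card (Eg n m)) / real n \<le> 1 + 1 / real L"
  proof -
    have "real (card (Eg n m)) \<le> real n + real m" using card by linarith
    moreover have "real m * real L \<le> real n"
    proof -
      have "m * L \<le> m * (4*L)" by simp
      then have "m * L \<le> n" using m4 by linarith
      then show ?thesis by (metis of_nat_le_iff of_nat_mult)
    qed
    ultimately have "real L * real (card (Eg n m)) \<le> real n + real L * real n"
    proof -
      have "real L * real (card (Eg n m)) \<le> real L * (real n + real m)"
        using \<open>real (card (Eg n m)) \<le> real n + real m\<close> by (intro mult_left_mono) auto
      then show ?thesis using \<open>real m * real L \<le> real n\<close> by (simp add: algebra_simps)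
    qed
    then show ?thesis using npos L1
      by (simp add: field_simps)
  qed
  have unsol: "\<not> broadcast_solvable {..<n} (Eg n m) k"
    if k: "1 \<le> k" "real k < (1/8) * real n / real L" for k
  proof -
    have "real k * (8 * real L) < real n" using k L1 by (simp add: field_simps)
    then have "k * (8*L) < n" by (metis of_nat_less_iff of_nat_mult of_nat_numeral)
    then have "(k+1) * (4*L) \<le> n" using L8 by (simp add: algebra_simps)
    then have "k + 1 \<le> m" unfolding m_def using L1 by (simp add: less_eq_div_iff_mult_less_eq)
    then show ?thesis using unsolvable[OF mn k(1)] by simp
  qed
  show ?thesis
    by (rule exI[of _ "Eg n m"]) (use sg cg dens unsol Ldef in auto)
qed

lemma pow_ge: "6 \<le> j \<Longrightarrow> 8 * j \<le> (2::nat) ^ j"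
proof (induction j rule: dec_induct)
  case base then show ?case by simp
next
  case (step j)
  have "8 \<le> (2::nat) ^ j"
  proof -
    have "(2::nat)^3 \<le> 2^j" using step(1) by (intro power_increasing) auto
    then show ?thesis by simp
  qed
  then show ?case using step by simp
qed

theorem corollary2:
  shows "\<exists>c C. c > 0 \<and>
    infinite {n::nat. \<exists>E :: nat set set.
       simple_graph {..<n} E \<and> connected_graph {..<n} E \<and>
       real (card E) / real n \<le> 1 + C / real (log_star (real n)) \<and>
       (\<forall>k. 1 \<le> k \<and> real k < c * real n / real (log_star (real n))
              \<longrightarrow> \<not> broadcast_solvable {..<n} E k)}"
proof (intro exI conjI)
  show "(1/8::real) > 0" by simp
  show "infinite {n::nat. \<exists>E :: nat set set.
       simple_graph {..<n} E \<and> connected_graph {..<n} E \<and>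
       real (card E) / real n \<le> 1 + 1 / real (log_star (real n)) \<and>
       (\<forall>k. 1 \<le> k \<and> real k < (1/8) * real n / real (log_star (real n))
              \<longrightarrow> \<not> broadcast_solvable {..<n} E k)}"
    unfolding infinite_nat_iff_unbounded_le
  proof
    fix N :: nat
    define j where "j = N + 6"
    define n :: nat where "n = 2^j"
    have rn: "real n = 2^j" unfolding n_def by simp
    have "N < 2^N" by (rule less_exp)
    moreover have "(2::nat)^N \<le> 2^j" unfolding j_def by (intro power_increasing) auto
    ultimately have Nn: "N \<le> n" unfolding n_def by linarith
    have n1: "1 < real n" unfolding rn j_def by simp
    define L where "L = log_star (real n)"
    have L1: "1 \<le> L" unfolding L_def using log_star_ge1[OF n1, of j] rn by simp
    have Lj: "L \<le> j" unfolding L_def using log_star_le[of "real n" j] rn n1 by simp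
    have "8 * j \<le> n" unfolding n_def by (rule pow_ge) (simp add: j_def)
    then have L8: "8 * L \<le> n" using Lj by linarith
    show "\<exists>n\<ge>N. n \<in> {n::nat. \<exists>E :: nat set set.
       simple_graph {..<n} E \<and> connected_graph {..<n} E \<and>
       real (card E) / real n \<le> 1 + 1 / real (log_star (real n)) \<and>
       (\<forall>k. 1 \<le> k \<and> real k < (1/8) * real n / real (log_star (real n))
              \<longrightarrow> \<not> broadcast_solvable {..<n} E k)}"
      using good_n[OF L1 L8 L_def[symmetric]] Nn by blast
  qed
qed

end
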